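(* Let $n,f$ be positive integers such that $2^{f/2}=O(n)$. Any $f$-FDO with an arbitrary finite stretch for $n$-vertex directed graphs requires $\Omega(2^{f/2}\, n)$ bits of space, regardless of the query time.
   Context: For a directed graph $G=(V,E)$ and $F\subseteq E$, $G-F$ is $G$ with the edges of $F$ removed; $\mathrm{diam}(H)=\max_{s,t} d_H(s,t)$, which is $+\infty$ if $H$ is not strongly connected. An $f$-FDO ($f$-edge fault-tolerant diameter oracle) for $G$ is a data structure built from $G$ that, on query a set $F\subseteq E$ with $|F|\le f$, returns a value $\widehat{D}(F)$; it has stretch $\sigma\ge 1$ if always $\mathrm{diam}(G-F)\le \widehat{D}(F)\le \sigma\cdot \mathrm{diam}(G-F)$. A finite stretch $\sigma$ in particular forces $\widehat D(F)=+\infty$ exactly when $\mathrm{diam}(G-F)=+\infty$. *)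

theory Defs
  imports Complex_Main "HOL-Library.Extended_Real"
begin

definition digraph :: "nat \<Rightarrow> (nat \<times> nat) set \<Rightarrow> bool" where
  "digraph n E \<longleftrightarrow> E \<subseteq> {0..<n} \<times> {0..<n} \<and> (\<forall>v. (v, v) \<notin> E)"

definition dist_g :: "(nat \<times> nat) set \<Rightarrow> nat \<Rightarrow> nat \<Rightarrow> enat" where
  "dist_g E s t = (INF k \<in> {k. (s, t) \<in> E ^^ k}. enat k)"

definition diam_g :: "nat \<Rightarrow> (nat \<times> nat) set \<Rightarrow> enat" where
  "diam_g n E = (SUP s \<in> {0..<n}. SUP t \<in> {0..<n}. dist_g E s t)"

text \<open>An f-FDO with stretch sigma for n-vertex digraphs, modelled information-theoretically:
  a bit-string encoding of each graph, and an arbitrary (unbounded time) query function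
  answering from the encoding alone.\<close>
definition is_FDO ::
  "nat \<Rightarrow> nat \<Rightarrow> real \<Rightarrow> ((nat \<times> nat) set \<Rightarrow> bool list)
     \<Rightarrow> (bool list \<Rightarrow> (nat \<times> nat) set \<Rightarrow> ereal) \<Rightarrow> bool" where
  "is_FDO n f \<sigma> enc Q \<longleftrightarrow>
     (\<forall>E F. digraph n E \<and> F \<subseteq> E \<and> card F \<le> f \<longrightarrow>
        ereal_of_enat (diam_g n (E - F)) \<le> Q (enc E) F \<and>
        Q (enc E) F \<le> ereal \<sigma> * ereal_of_enat (diam_g n (E - F)))"

end

theory Submission
  imports Defs
begin


lemma blk_inj:
  assumes "o1 < (W::nat)" "o2 < W" "c1 * W + o1 = c2 * W + o2"
  shows "c1 = c2 \<and> o1 = o2"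
proof -
  have W: "W > 0" using assms by simp
  have 1: "c1 = (c1 * W + o1) div W" using W assms(1) by simp
  have 2: "c2 = (c2 * W + o2) div W" using W assms(2) by simp
  have "c1 = c2" using 1 2 assms(3) by metis
  then show ?thesis using assms(3) by simp
qed

definition anc :: "nat \<Rightarrow> nat set" where
  "anc l = {x. \<exists>k. x = l div 2^k \<and> 1 \<le> x}"

lemma anc_self: "1 \<le> l \<Longrightarrow> l \<in> anc l"
  unfolding anc_def by (auto intro: exI[of _ 0])

lemma anc_le: "x \<in> anc l \<Longrightarrow> x \<le> l"
  unfolding anc_def by auto

lemma anc_ge1: "x \<in> anc l \<Longrightarrow> 1 \<le> x"
  unfolding anc_def by auto

lemma anc_parent: assumes "x \<in> anc l" "2 \<le> x" shows "x div 2 \<in> anc l"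
proof -
  obtain k where k: "x = l div 2^k" using assms unfolding anc_def by auto
  have "x div 2 = l div 2^Suc k" using k by (metis div_mult2_eq power_Suc2)
  moreover have "1 \<le> x div 2" using assms(2) by simp
  ultimately show ?thesis unfolding anc_def by blast
qed

lemma anc_root: "2^h \<le> l \<Longrightarrow> l < 2*2^h \<Longrightarrow> 1 \<in> anc l"
  unfolding anc_def
proof (intro CollectI exI[of _ h] conjI)
  assume a: "2^h \<le> l" "l < 2*2^h"
  have "l div 2^h \<ge> 1" using a by (simp add: div_greater_zero_iff Suc_le_eq)
  moreover have "l div 2^h < 2" using a by (simp add: div_less_iff_less_mult)
  ultimately show "1 = l div 2^h" by simp
qed simp

lemma anc_leaf: "2^h \<le> l \<Longrightarrow> l < 2*2^h \<Longrightarrow> 2^h \<le> x \<Longrightarrow> x \<in> anc l \<Longrightarrow> x = l"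
  unfolding anc_def
proof clarsimp
  fix k assume a: "2^h \<le> l" "l < 2*2^h" "2^h \<le> l div 2^k"
  show "l div 2^k = l"
  proof (cases k)
    case 0 then show ?thesis by simp
  next
    case (Suc m)
    have "l div 2^k \<le> l div 2" using Suc
      by (metis div_le_mono div_mult2_eq le_refl power_Suc div_le_dividend)
    also have "\<dots> < 2^h" using a(2) by simp
    finally show ?thesis using a(3) by simp
  qed
qed

lemma sib: "(a::nat) div 2 = b div 2 \<Longrightarrow> a \<noteq> b \<Longrightarrow> a = (if even b then b + 1 else b - 1)"
  by presburger



lemma dist_fin: "(s,t) \<in> E\<^sup>* \<Longrightarrow> dist_g E s t \<noteq> \<infinity>"
proof -
  assume "(s,t) \<in> E\<^sup>*"
  then obtain k where "(s,t) \<in> E ^^ k" using rtrancl_power by blast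
  then have "dist_g E s t \<le> enat k" unfolding dist_g_def by (intro INF_lower) auto
  then show ?thesis by (metis infinity_ileE)
qed

lemma dist_inf: "(s,t) \<notin> E\<^sup>* \<Longrightarrow> dist_g E s t = \<infinity>"
proof -
  assume "(s,t) \<notin> E\<^sup>*"
  then have "{k. (s, t) \<in> E ^^ k} = {}" using rtrancl_power by blast
  then show ?thesis unfolding dist_g_def by (simp add: top_enat_def)
qed

lemma diam_inf: "s < n \<Longrightarrow> t < n \<Longrightarrow> (s,t) \<notin> E\<^sup>* \<Longrightarrow> diam_g n E = \<infinity>"
proof -
  assume a: "s < n" "t < n" "(s,t) \<notin> E\<^sup>*"
  have "dist_g E s t \<le> (SUP t \<in> {0..<n}. dist_g E s t)" using a by (intro SUP_upper) auto
  also have "\<dots> \<le> diam_g n E" unfolding diam_g_def using a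
    by (intro SUP_upper[where f="\<lambda>s. SUP t \<in> {0..<n}. dist_g E s t"]) auto
  finally show ?thesis using dist_inf[OF a(3)] by (simp add: top_unique[unfolded top_enat_def])
qed

lemma Sup_fin_enat: "finite A \<Longrightarrow> (\<forall>x\<in>A. f x \<noteq> \<infinity>) \<Longrightarrow> (SUP x\<in>A. f x) \<noteq> (\<infinity>::enat)"
proof -
  assume a: "finite A" "\<forall>x\<in>A. f x \<noteq> \<infinity>"
  show ?thesis
  proof (cases "A = {}")
    case True then show ?thesis by (simp add: bot_enat_def)
  next
    case False
    then have "(SUP x\<in>A. f x) = Max (f ` A)" using a by (simp add: Sup_enat_def)
    moreover have "Max (f ` A) \<in> f ` A" using a False by (intro Max_in) auto
    ultimately show ?thesis using a by auto
  qed
qed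

lemma diam_fin: "(\<forall>s<n. \<forall>t<n. (s,t) \<in> E\<^sup>*) \<Longrightarrow> diam_g n E \<noteq> \<infinity>"
  unfolding diam_g_def
  apply (rule Sup_fin_enat, simp)
  apply (rule ballI)
  apply (rule Sup_fin_enat, simp)
  by (metis atLeastLessThan_iff dist_fin)

lemma card_short: "card {xs::bool list. length xs < M} < 2^M"
proof (induction M)
  case 0 then show ?case by simp
next
  case (Suc M)
  have "{xs::bool list. length xs < Suc M} = {xs. length xs < M} \<union> {xs. set xs \<subseteq> UNIV \<and> length xs = M}"
    by auto
  then have "card {xs::bool list. length xs < Suc M} \<le> card {xs::bool list. length xs < M} + card {xs::bool list. set xs \<subseteq> UNIV \<and> length xs = M}"
    by (metis card_Un_le)
  also have "card {xs::bool list. set xs \<subseteq> UNIV \<and> length xs = M} = 2^M"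
    by (subst card_lists_length_eq) auto
  finally show ?case using Suc.IH by simp
qed

lemma finite_short: "finite {xs::bool list. length xs < M}"
proof -
  have "{xs::bool list. length xs < M} \<subseteq> {xs. set xs \<subseteq> UNIV \<and> length xs \<le> M}" by auto
  then show ?thesis by (rule finite_subset) (intro finite_lists_length_le, simp)
qed

lemma pigeon:
  assumes "inj_on g X" "finite X" "card X = 2^M"
  shows "\<exists>x\<in>X. M \<le> length ((g x)::bool list)"
proof (rule ccontr)
  assume "\<not> ?thesis"
  then have "g ` X \<subseteq> {xs. length xs < M}" by auto
  then have "card (g ` X) \<le> card {xs::bool list. length xs < M}"
    by (intro card_mono finite_short)
  then show False using card_short[of M] assms card_image by fastforce
qed

lemma FDO_inf:
  assumes "is_FDO n f \<sigma> enc Q" "\<sigma> \<ge> 1" "digraph n E" "F \<subseteq> E" "card F \<le> f"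
  shows "Q (enc E) F = \<infinity> \<longleftrightarrow> diam_g n (E - F) = \<infinity>"
proof -
  have lo: "ereal_of_enat (diam_g n (E - F)) \<le> Q (enc E) F" and
       hi: "Q (enc E) F \<le> ereal \<sigma> * ereal_of_enat (diam_g n (E - F))"
    using assms unfolding is_FDO_def by blast+
  show ?thesis
  proof (cases "diam_g n (E - F)")
    case (enat k)
    then have "Q (enc E) F \<le> ereal (\<sigma> * real k)" using hi by simp
    then show ?thesis using enat by auto
  next
    case infinity
    then show ?thesis using lo by simp
  qed
qed



definition vx :: "nat \<Rightarrow> nat \<Rightarrow> nat \<Rightarrow> nat" where
  "vx K c d = Suc (c * (4*K) + d)"

lemma vx_eq: "o1 < 4*K \<Longrightarrow> o2 < 4*K \<Longrightarrow> vx K c1 o1 = vx K c2 o2 \<longleftrightarrow> c1 = c2 \<and> o1 = o2"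
  unfolding vx_def using blk_inj[of o1 "4*K" o2 c1 c2] by auto

lemma vx_pos[simp]: "vx K c d \<noteq> 0" "0 < vx K c d"
  unfolding vx_def by auto

lemma vx_bound: "c < P \<Longrightarrow> d < 4*K \<Longrightarrow> vx K c d \<le> P * (4*K)"
proof -
  assume a: "c < P" "d < 4*K"
  have "Suc c \<le> P" using a by simp
  then have "Suc c * (4*K) \<le> P * (4*K)" by (rule mult_right_mono) simp
  then show ?thesis using a unfolding vx_def by simp
qed

lemma vx_cover: "0 < u \<Longrightarrow> u \<le> P * (4*K) \<Longrightarrow> \<exists>c<P. \<exists>d<4*K. u = vx K c d"
proof -
  assume a: "0 < u" "u \<le> P * (4*K)"
  define W :: nat where "W = 4*K"
  have W: "W > 0" using a unfolding W_def by (cases "K = 0") auto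
  have "u - 1 = (u-1) div W * W + (u-1) mod W" by simp
  moreover have "(u-1) mod W < W" using W by simp
  moreover have "(u-1) div W < P"
    using a W by (simp add: W_def div_less_iff_less_mult)
  ultimately show ?thesis using a unfolding vx_def W_def[symmetric]
    by (intro exI[of _ "(u-1) div W"] conjI exI[of _ "(u-1) mod W"]) (auto simp: mult.commute)
qed

definition Efix :: "nat \<Rightarrow> nat \<Rightarrow> nat \<Rightarrow> (nat \<times> nat) set" where
  "Efix n K P =
    {(vx K c (s div 2), vx K c s) | c s. c < P \<and> 2 \<le> s \<and> s < 2*K}
  \<union> {(vx K c (2*K + s), vx K c (2*K + s div 2)) | c s. c < P \<and> 2 \<le> s \<and> s < 2*K}
  \<union> {(vx K c 1, vx K c 0) | c. c < P}
  \<union> {(vx K c 0, vx K c (2*K+1)) | c. c < P}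
  \<union> {(vx K c (2*K+1), vx K c d) | c d. c < P \<and> d < 4*K \<and> d \<noteq> 2*K+1}
  \<union> {(u, 0) | u. 0 < u \<and> u < n}
  \<union> {(0, vx K c 1) | c. c < P}
  \<union> {(0, u) | u. P * (4*K) < u \<and> u < n}"

definition Ebits :: "nat \<Rightarrow> (nat \<times> nat \<times> nat) set \<Rightarrow> (nat \<times> nat) set" where
  "Ebits K S = {(vx K c (K + i), vx K c (2*K + (K + j))) | c i j. (c,i,j) \<in> S}"

definition Eg :: "nat \<Rightarrow> nat \<Rightarrow> nat \<Rightarrow> (nat \<times> nat \<times> nat) set \<Rightarrow> (nat \<times> nat) set" where
  "Eg n K P S = Efix n K P \<union> Ebits K S"

definition Dom :: "nat \<Rightarrow> nat \<Rightarrow> (nat \<times> nat \<times> nat) set" where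
  "Dom K P = {(c,i,j). c < P \<and> i < K \<and> j < K}"

definition cutA :: "nat \<Rightarrow> nat \<Rightarrow> nat \<Rightarrow> (nat \<times> nat) set" where
  "cutA K c l = {(vx K c (s div 2), vx K c s) | s. 2 \<le> s \<and> s < 2*K \<and> s div 2 \<in> anc l \<and> s \<notin> anc l}"

definition cutB :: "nat \<Rightarrow> nat \<Rightarrow> nat \<Rightarrow> (nat \<times> nat) set" where
  "cutB K c l = {(vx K c (2*K + s), vx K c (2*K + s div 2)) | s. 2 \<le> s \<and> s < 2*K \<and> s div 2 \<in> anc l \<and> s \<notin> anc l}"

definition Fc :: "nat \<Rightarrow> nat \<Rightarrow> nat \<Rightarrow> nat \<Rightarrow> (nat \<times> nat) set" where
  "Fc K c i j = cutA K c (K+i) \<union> cutB K c (K+j) \<union> {(vx K c 1, vx K c 0)}"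

lemma digraph_Eg:
  assumes "1 \<le> K" "P * (4*K) < n" "S \<subseteq> Dom K P"
  shows "digraph n (Eg n K P S)"
proof -
  have bnd: "vx K c d < n" if "c < P" "d < 4*K" for c d
    using vx_bound[OF that] assms(2) by simp
  have K: "1 \<le> K" by fact
  have dom: "c < P \<and> i < K \<and> j < K" if "(c,i,j) \<in> S" for c i j
    using assms(3) that unfolding Dom_def by auto
  have n0: "0 < n" using assms(2) by simp
  have "Eg n K P S \<subseteq> {0..<n} \<times> {0..<n}"
    unfolding Eg_def Efix_def Ebits_def
    using n0 apply (auto intro!: bnd dest!: dom)
    using K by linarith+
  moreover have "(v,v) \<notin> Eg n K P S" for v
    unfolding Eg_def Efix_def Ebits_def
    using K by (auto simp: vx_eq dest!: dom)
  ultimately show ?thesis unfolding digraph_def by blast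
qed



definition sibf :: "nat \<Rightarrow> nat" where "sibf y = (if even y then y + 1 else y - 1)"

definition Sset :: "nat \<Rightarrow> nat \<Rightarrow> nat set" where
  "Sset K l = {s. 2 \<le> s \<and> s < 2*K \<and> s div 2 \<in> anc l \<and> s \<notin> anc l}"

lemma finite_Sset[simp]: "finite (Sset K l)"
  unfolding Sset_def by (rule finite_subset[of _ "{..<2*K}"]) auto

lemma Sset_sub:
  assumes K: "K = 2^h" and l: "K \<le> l" "l < 2*K"
  shows "Sset K l \<subseteq> (\<lambda>k. sibf (l div 2^k)) ` {..<h}"
proof
  fix s assume "s \<in> Sset K l"
  then have s: "2 \<le> s" "s < 2*K" "s div 2 \<in> anc l" "s \<notin> anc l" unfolding Sset_def by auto
  obtain m where m: "s div 2 = l div 2^m" "1 \<le> s div 2" using s(3) unfolding anc_def by auto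
  have "m \<noteq> 0"
  proof
    assume "m = 0"
    then have "s div 2 = l" using m by simp
    moreover have "s div 2 < K" using s(2) by simp
    ultimately show False using l by simp
  qed
  then obtain k where k: "m = Suc k" by (cases m) auto
  have "0 < l div 2^m" using m by simp
  then have "2^m \<le> l" by (simp add: div_greater_zero_iff)
  have "m < Suc h"
  proof (rule ccontr)
    assume "\<not> m < Suc h"
    then have "(2::nat)^Suc h \<le> 2^m" by (intro power_increasing) auto
    then show False using \<open>2^m \<le> l\<close> l K by simp
  qed
  then have kh: "k < h" using k by simp
  define y where "y = l div 2^k"
  have yd: "y div 2 = s div 2" unfolding y_def using m k by (metis div_mult2_eq power_Suc2)
  have "1 \<le> y" using yd m(2) by (metis div_le_dividend le_trans)
  then have "y \<in> anc l" unfolding y_def anc_def by blast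
  then have "s \<noteq> y" using s(4) by blast
  then have sy: "s = sibf y" unfolding sibf_def by (rule sib[OF yd[symmetric]])
  show "s \<in> (\<lambda>k. sibf (l div 2^k)) ` {..<h}"
  proof (rule image_eqI)
    show "s = sibf (l div 2^k)" using sy y_def by simp
    show "k \<in> {..<h}" using kh by simp
  qed
qed

lemma card_Sset:
  assumes "K = 2^h" "K \<le> l" "l < 2*K"
  shows "card (Sset K l) \<le> h"
proof -
  have "card (Sset K l) \<le> card ((\<lambda>k. sibf (l div 2^k)) ` {..<h})"
    using Sset_sub[OF assms] by (intro card_mono) auto
  also have "\<dots> \<le> card {..<h}" by (rule card_image_le) simp
  finally show ?thesis by simp
qed

lemma cutA_img: "cutA K c l = (\<lambda>s. (vx K c (s div 2), vx K c s)) ` Sset K l"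
  unfolding cutA_def Sset_def by auto

lemma cutB_img: "cutB K c l = (\<lambda>s. (vx K c (2*K + s), vx K c (2*K + s div 2))) ` Sset K l"
  unfolding cutB_def Sset_def by auto

lemma card_Fc:
  assumes "K = 2^h" "i < K" "j < K"
  shows "card (Fc K c i j) \<le> 2*h + 1"
proof -
  have a: "card (cutA K c (K+i)) \<le> h"
    unfolding cutA_img by (rule le_trans[OF card_image_le card_Sset]) (use assms in auto)
  have b: "card (cutB K c (K+j)) \<le> h"
    unfolding cutB_img by (rule le_trans[OF card_image_le card_Sset]) (use assms in auto)
  have "card (Fc K c i j) \<le> card (cutA K c (K+i) \<union> cutB K c (K+j)) + card {(vx K c 1, vx K c 0)}"
    unfolding Fc_def by (rule card_Un_le)
  also have "\<dots> \<le> card (cutA K c (K+i)) + card (cutB K c (K+j)) + 1"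
    using card_Un_le[of "cutA K c (K+i)" "cutB K c (K+j)"] by simp
  finally show ?thesis using a b by simp
qed

lemma Fc_sub:
  assumes "1 \<le> K" "c < P"
  shows "Fc K c i j \<subseteq> Efix n K P"
  unfolding Fc_def cutA_def cutB_def Efix_def using assms by blast



definition BadS :: "nat \<Rightarrow> nat \<Rightarrow> nat \<Rightarrow> nat \<Rightarrow> nat set" where
  "BadS K c l l' = vx K c ` {d. d = 0 \<or> (1 \<le> d \<and> d < 2*K \<and> d \<notin> anc l) \<or>
      (2*K+1 \<le> d \<and> d < 4*K \<and> d - 2*K \<in> anc l')}"

lemma neg_closed:
  assumes K: "K = 2^h" and c: "c < P" and ij: "i < K" "j < K" and nS: "(c,i,j) \<notin> S"
    and S: "S \<subseteq> Dom K P"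
    and e: "(u,v) \<in> Eg n K P S" "(u,v) \<notin> Fc K c i j" and v: "v \<in> BadS K c (K+i) (K+j)"
  shows "u \<in> BadS K c (K+i) (K+j)"
proof -
  define l where "l = K + i"
  define l' where "l' = K + j"
  have K1: "1 \<le> K" using K by simp
  have l: "K \<le> l" "l < 2*K" and l': "K \<le> l'" "l' < 2*K" using ij unfolding l_def l'_def by auto
  have root: "1 \<in> anc l" "1 \<in> anc l'" using anc_root K l l' by auto
  obtain d where vd: "v = vx K c d" and dc: "d = 0 \<or> (1 \<le> d \<and> d < 2*K \<and> d \<notin> anc l) \<or>
      (2*K+1 \<le> d \<and> d < 4*K \<and> d - 2*K \<in> anc l')"
    using v unfolding BadS_def l_def l'_def by auto
  have d4: "d < 4*K" using dc K1 by auto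
  have nF: "(u,v) \<notin> cutA K c l" "(u,v) \<notin> cutB K c l'" "(u,v) \<noteq> (vx K c 1, vx K c 0)"
    using e(2) unfolding Fc_def l_def l'_def by auto
  have BadA: "vx K c p \<in> BadS K c l l'" if "1 \<le> p" "p < 2*K" "p \<notin> anc l" for p
    unfolding BadS_def using that by blast
  have BadB: "vx K c (2*K+q) \<in> BadS K c l l'" if "1 \<le> q" "q < 2*K" "q \<in> anc l'" for q
    unfolding BadS_def using that by (intro imageI) auto
  have Bad0: "vx K c 0 \<in> BadS K c l l'"
    unfolding BadS_def by blast
  have dom: "c' < P \<and> i' < K \<and> j' < K" if "(c',i',j') \<in> S" for c' i' j'
    using S that unfolding Dom_def by auto
  have "u \<in> BadS K c l l'"
    using e(1) unfolding Eg_def Efix_def Ebits_def Un_iff mem_Collect_eq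
  proof (elim disjE exE conjE)
    fix c' s assume uv: "(u, v) = (vx K c' (s div 2), vx K c' s)" and cs: "c' < P" "2 \<le> s" "s < 2*K"
    then have "c' = c \<and> s = d" using vd d4 by (simp add: vx_eq)
    then have "s \<notin> anc l" using dc cs by auto
    moreover have "(u,v) \<notin> cutA K c l" by (rule nF)
    ultimately have "s div 2 \<notin> anc l" using uv cs \<open>c' = c \<and> s = d\<close> unfolding cutA_def by blast
    then show ?thesis using uv cs \<open>c' = c \<and> s = d\<close> by (auto intro!: BadA)
  next
    fix c' s assume uv: "(u, v) = (vx K c' (2*K + s), vx K c' (2*K + s div 2))" and cs: "c' < P" "2 \<le> s" "s < 2*K"
    then have "c' = c \<and> 2*K + s div 2 = d" using vd d4 by (simp add: vx_eq)
    then have "s div 2 \<in> anc l'" using dc cs by auto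
    moreover have "(u,v) \<notin> cutB K c l'" by (rule nF)
    ultimately have "s \<in> anc l'" using uv cs \<open>c' = c \<and> 2*K + s div 2 = d\<close> unfolding cutB_def by blast
    then show ?thesis using uv cs \<open>c' = c \<and> 2*K + s div 2 = d\<close> by (auto intro!: BadB)
  next
    fix c' assume uv: "(u, v) = (vx K c' 1, vx K c' 0)" "c' < P"
    then have "c' = c" using vd d4 K1 by (simp add: vx_eq)
    then show ?thesis using uv nF by simp
  next
    fix c' assume uv: "(u, v) = (vx K c' 0, vx K c' (2*K+1))" "c' < P"
    then have "c' = c" using vd d4 K1 by (simp add: vx_eq)
    then show ?thesis using uv Bad0 by simp
  next
    fix c' d' assume uv: "(u, v) = (vx K c' (2*K+1), vx K c' d')" "c' < P" "d' < 4*K" "d' \<noteq> 2*K+1"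
    then have "c' = c" using vd d4 K1 by (simp add: vx_eq)
    then show ?thesis using uv BadB[of 1] root K1 by simp
  next
    fix u' assume "(u, v) = (u', 0)"
    then show ?thesis using vd by simp
  next
    fix c' assume uv: "(u, v) = (0, vx K c' 1)" "c' < P"
    then have "c' = c \<and> d = 1" using vd d4 K1 by (simp add: vx_eq)
    then show ?thesis using dc root by auto
  next
    fix u' assume uv: "(u, v) = (0, u')" "P * (4*K) < u'"
    then show ?thesis using vd vx_bound[OF c d4] by simp
  next
    fix c' i' j' assume uv: "(u, v) = (vx K c' (K + i'), vx K c' (2*K + (K + j')))" and S': "(c', i', j') \<in> S"
    have b: "c' < P" "i' < K" "j' < K" using dom[OF S'] by auto
    then have cd: "c' = c \<and> 2*K + (K+j') = d" using uv vd d4 by (simp add: vx_eq)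
    then have "K + j' \<in> anc l'" using dc b by auto
    then have "K + j' = l'" using anc_leaf[of h l' "K+j'"] K l' by simp
    then have "j' = j" unfolding l'_def by simp
    then have "i' \<noteq> i" using nS S' cd by auto
    then have "K + i' \<noteq> l" unfolding l_def by simp
    then have "K + i' \<notin> anc l" using anc_leaf[of h l "K+i'"] K l by auto
    then show ?thesis using uv cd b K1 by (auto intro!: BadA)
  qed
  then show ?thesis unfolding l_def l'_def .
qed

lemma neg_reach:
  assumes K: "K = 2^h" and c: "c < P" and ij: "i < K" "j < K" and nS: "(c,i,j) \<notin> S"
    and S: "S \<subseteq> Dom K P"
  shows "(0, vx K c (2*K+1)) \<notin> (Eg n K P S - Fc K c i j)\<^sup>*"
proof
  let ?R = "Eg n K P S - Fc K c i j"
  let ?B = "BadS K c (K+i) (K+j)"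
  assume r: "(0, vx K c (2*K+1)) \<in> ?R\<^sup>*"
  have K1: "1 \<le> K" using K by simp
  have "1 \<in> anc (K+j)" using anc_root[of h "K+j"] K ij by auto
  then have t: "vx K c (2*K+1) \<in> ?B" unfolding BadS_def using K1 by (intro imageI) auto
  have "0 \<in> ?B" using r
  proof (induction rule: converse_rtrancl_induct)
    case base then show ?case by (rule t)
  next
    case (step y z)
    then show ?case using neg_closed[OF K c ij nS S, of y z] by blast
  qed
  then show False unfolding BadS_def by auto
qed



lemma pos_reach:
  assumes K: "K = 2^h" and c: "c < P" and ij: "i < K" "j < K" and inS: "(c,i,j) \<in> S"
    and n: "P * (4*K) < n"
  shows "\<forall>u<n. \<forall>v<n. (u,v) \<in> (Eg n K P S - Fc K c i j)\<^sup>*"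
proof -
  define R where "R = Eg n K P S - Fc K c i j"
  define l where "l = K + i"
  define l' where "l' = K + j"
  have K1: "1 \<le> K" using K by simp
  have l: "K \<le> l" "l < 2*K" and l': "K \<le> l'" "l' < 2*K" using ij unfolding l_def l'_def by auto
  have FcD: "(\<exists>s. 2 \<le> s \<and> s < 2*K \<and> s \<notin> anc l \<and> a = vx K c (s div 2) \<and> b = vx K c s) \<or>
     (\<exists>s. 2 \<le> s \<and> s < 2*K \<and> s \<notin> anc l' \<and> a = vx K c (2*K+s) \<and> b = vx K c (2*K + s div 2)) \<or>
     (a = vx K c 1 \<and> b = vx K c 0)" if "(a,b) \<in> Fc K c i j" for a b
    using that unfolding Fc_def cutA_def cutB_def l_def l'_def by auto
  have inR: "e \<in> R" if "e \<in> Efix n K P \<or> e \<in> Ebits K S" "e \<notin> Fc K c i j" for e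
    using that unfolding R_def Eg_def by auto
  have toG: "(u,0) \<in> R" if "0 < u" "u < n" for u
  proof (rule inR)
    show "(u,0) \<in> Efix n K P \<or> (u,0) \<in> Ebits K S" unfolding Efix_def using that by blast
    show "(u,0) \<notin> Fc K c i j"
      by (auto dest!: FcD)
  qed
  have fromG1: "(0,u) \<in> R" if "P*(4*K) < u" "u < n" for u
  proof (rule inR)
    show "(0,u) \<in> Efix n K P \<or> (0,u) \<in> Ebits K S" unfolding Efix_def using that by blast
    show "(0,u) \<notin> Fc K c i j"
      by (auto dest!: FcD)
  qed
  have fromG2: "(0, vx K c' 1) \<in> R" if "c' < P" for c'
  proof (rule inR)
    show "(0, vx K c' 1) \<in> Efix n K P \<or> (0, vx K c' 1) \<in> Ebits K S" unfolding Efix_def using that by blast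
    show "(0, vx K c' 1) \<notin> Fc K c i j"
      by (auto dest!: FcD)
  qed
  have mid1: "(vx K c' 1, vx K c' 0) \<in> R" if "c' < P" "c' \<noteq> c" for c'
  proof (rule inR)
    show "(vx K c' 1, vx K c' 0) \<in> Efix n K P \<or> (vx K c' 1, vx K c' 0) \<in> Ebits K S"
      unfolding Efix_def using that by blast
    show "(vx K c' 1, vx K c' 0) \<notin> Fc K c i j"
      using that K1 by (auto dest!: FcD simp: vx_eq)
  qed
  have mid2: "(vx K c' 0, vx K c' (2*K+1)) \<in> R" if "c' < P" for c'
  proof (rule inR)
    show "(vx K c' 0, vx K c' (2*K+1)) \<in> Efix n K P \<or> (vx K c' 0, vx K c' (2*K+1)) \<in> Ebits K S"
      unfolding Efix_def using that by blast
    show "(vx K c' 0, vx K c' (2*K+1)) \<notin> Fc K c i j"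
      using that K1 by (auto dest!: FcD simp: vx_eq)
  qed
  have hub: "(vx K c' (2*K+1), vx K c' d) \<in> R" if "c' < P" "d < 4*K" "d \<noteq> 2*K+1" for c' d
  proof (rule inR)
    show "(vx K c' (2*K+1), vx K c' d) \<in> Efix n K P \<or> (vx K c' (2*K+1), vx K c' d) \<in> Ebits K S"
      unfolding Efix_def using that by blast
    show "(vx K c' (2*K+1), vx K c' d) \<notin> Fc K c i j"
      using that K1 by (auto dest!: FcD simp: vx_eq)
  qed
  have bit: "(vx K c l, vx K c (2*K + l')) \<in> R"
  proof (rule inR)
    show "(vx K c l, vx K c (2*K + l')) \<in> Efix n K P \<or> (vx K c l, vx K c (2*K + l')) \<in> Ebits K S"
      unfolding Ebits_def l_def l'_def using inS by blast
    show "(vx K c l, vx K c (2*K + l')) \<notin> Fc K c i j"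
      using l l' K1 by (auto dest!: FcD simp: vx_eq)
  qed
  have pathA: "(vx K c 1, vx K c x) \<in> R\<^sup>*" if "x \<in> anc l" for x
    using that
  proof (induction x rule: less_induct)
    case (less x)
    show ?case
    proof (cases "x = 1")
      case True then show ?thesis by simp
    next
      case False
      then have x2: "2 \<le> x" using anc_ge1[OF less.prems] by simp
      have xl: "x < 2*K" using anc_le[OF less.prems] l by simp
      have p: "x div 2 \<in> anc l" by (rule anc_parent[OF less.prems x2])
      have "(vx K c (x div 2), vx K c x) \<in> R"
      proof (rule inR)
        show "(vx K c (x div 2), vx K c x) \<in> Efix n K P \<or> (vx K c (x div 2), vx K c x) \<in> Ebits K S"
          unfolding Efix_def using c x2 xl by blast
        show "(vx K c (x div 2), vx K c x) \<notin> Fc K c i j"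
          using x2 xl less.prems by (auto dest!: FcD simp: vx_eq)
      qed
      moreover have "(vx K c 1, vx K c (x div 2)) \<in> R\<^sup>*" using less.IH[OF _ p] x2 by simp
      ultimately show ?thesis by (meson rtrancl.rtrancl_into_rtrancl)
    qed
  qed
  have pathB: "(vx K c (2*K + x), vx K c (2*K+1)) \<in> R\<^sup>*" if "x \<in> anc l'" for x
    using that
  proof (induction x rule: less_induct)
    case (less x)
    show ?case
    proof (cases "x = 1")
      case True then show ?thesis by simp
    next
      case False
      then have x2: "2 \<le> x" using anc_ge1[OF less.prems] by simp
      have xl: "x < 2*K" using anc_le[OF less.prems] l' by simp
      have p: "x div 2 \<in> anc l'" by (rule anc_parent[OF less.prems x2])
      have "(vx K c (2*K + x), vx K c (2*K + x div 2)) \<in> R"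
      proof (rule inR)
        show "(vx K c (2*K + x), vx K c (2*K + x div 2)) \<in> Efix n K P \<or> (vx K c (2*K + x), vx K c (2*K + x div 2)) \<in> Ebits K S"
          unfolding Efix_def using c x2 xl by blast
        show "(vx K c (2*K + x), vx K c (2*K + x div 2)) \<notin> Fc K c i j"
          using x2 xl less.prems by (auto dest!: FcD simp: vx_eq)
      qed
      moreover have "(vx K c (2*K + x div 2), vx K c (2*K+1)) \<in> R\<^sup>*" using less.IH[OF _ p] x2 by simp
      ultimately show ?thesis by (meson converse_rtrancl_into_rtrancl)
    qed
  qed
  have toT: "(0, vx K c' (2*K+1)) \<in> R\<^sup>*" if "c' < P" for c'
  proof (cases "c' = c")
    case True
    have "(0, vx K c 1) \<in> R\<^sup>*" using fromG2[OF c] by simp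
    also have "(vx K c 1, vx K c l) \<in> R\<^sup>*" using pathA anc_self l K1 by simp
    also have "(vx K c l, vx K c (2*K + l')) \<in> R\<^sup>*" using bit by simp
    also have "(vx K c (2*K + l'), vx K c (2*K+1)) \<in> R\<^sup>*" using pathB anc_self l' K1 by simp
    finally show ?thesis using True by simp
  next
    case False
    have "(0, vx K c' 1) \<in> R\<^sup>*" using fromG2[OF that] by simp
    also have "(vx K c' 1, vx K c' 0) \<in> R\<^sup>*" using mid1[OF that False] by simp
    also have "(vx K c' 0, vx K c' (2*K+1)) \<in> R\<^sup>*" using mid2[OF that] by simp
    finally show ?thesis .
  qed
  have from0: "(0,u) \<in> R\<^sup>*" if "u < n" for u
  proof -
    consider "u = 0" | "P*(4*K) < u" | "0 < u \<and> u \<le> P*(4*K)" by linarith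
    then show ?thesis
    proof cases
      case 1 then show ?thesis by simp
    next
      case 2 then show ?thesis using fromG1 that by blast
    next
      case 3
      then obtain c' d where cd: "c' < P" "d < 4*K" "u = vx K c' d" using vx_cover by blast
      show ?thesis
      proof (cases "d = 2*K+1")
        case True then show ?thesis using toT cd by simp
      next
        case False
        then show ?thesis using toT[OF cd(1)] hub[OF cd(1,2) False] cd(3)
          by (meson rtrancl.rtrancl_into_rtrancl)
      qed
    qed
  qed
  have to0: "(u,0) \<in> R\<^sup>*" if "u < n" for u
    using toG[of u] that by (cases "u = 0") auto
  show ?thesis unfolding R_def[symmetric]
    using from0 to0 by (meson rtrancl_trans)
qed



lemma sep:
  assumes K: "K = 2^h" and n: "P * (4*K) < n" and f: "2*h + 1 \<le> f" and sig: "\<sigma> \<ge> 1"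
    and FDO: "is_FDO n f \<sigma> enc Q"
    and S: "S \<subseteq> Dom K P" and S': "S' \<subseteq> Dom K P" and t: "(c,i,j) \<in> S" "(c,i,j) \<notin> S'"
  shows "enc (Eg n K P S) \<noteq> enc (Eg n K P S')"
proof
  assume eq: "enc (Eg n K P S) = enc (Eg n K P S')"
  have K1: "1 \<le> K" using K by simp
  have tD: "c < P" "i < K" "j < K" using t S unfolding Dom_def by auto
  define F where "F = Fc K c i j"
  have F1: "F \<subseteq> Eg n K P S" "F \<subseteq> Eg n K P S'"
    using Fc_sub[OF K1 tD(1)] unfolding F_def Eg_def by auto
  have cF: "card F \<le> f" using card_Fc[OF K tD(2,3), of c] f unfolding F_def by simp
  have d1: "digraph n (Eg n K P S)" "digraph n (Eg n K P S')"
    using digraph_Eg[OF K1 n] S S' by auto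
  have "diam_g n (Eg n K P S - F) \<noteq> \<infinity>"
    unfolding F_def by (rule diam_fin, rule pos_reach[OF K tD t(1) n])
  then have q1: "Q (enc (Eg n K P S)) F \<noteq> \<infinity>"
    using FDO_inf[OF FDO sig d1(1) F1(1) cF] by simp
  have v: "vx K c (2*K+1) < n" using vx_bound[OF tD(1), of "2*K+1" K] n K1 by simp
  have "diam_g n (Eg n K P S' - F) = \<infinity>"
    unfolding F_def by (rule diam_inf[OF _ v neg_reach[OF K tD t(2) S']]) (use n in simp)
  then have q2: "Q (enc (Eg n K P S')) F = \<infinity>"
    using FDO_inf[OF FDO sig d1(2) F1(2) cF] by simp
  show False using q1 q2 eq by simp
qed

lemma card_Dom: "card (Dom K P) = P * K * K" "finite (Dom K P)"
proof -
  have "Dom K P = {..<P} \<times> {..<K} \<times> {..<K}" unfolding Dom_def by auto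
  then show "card (Dom K P) = P * K * K" "finite (Dom K P)" by (auto simp: card_cartesian_product)
qed

lemma core:
  assumes K: "K = 2^h" and n: "P * (4*K) < n" and f: "2*h + 1 \<le> f" and sig: "\<sigma> \<ge> 1"
    and FDO: "is_FDO n f \<sigma> enc Q"
  shows "\<exists>E. digraph n E \<and> P * K * K \<le> length (enc E)"
proof -
  have K1: "1 \<le> K" using K by simp
  let ?X = "Pow (Dom K P)"
  let ?g = "\<lambda>S. enc (Eg n K P S)"
  have inj: "inj_on ?g ?X"
  proof (rule inj_onI)
    fix S S' assume a: "S \<in> ?X" "S' \<in> ?X" "?g S = ?g S'"
    show "S = S'"
    proof (rule ccontr)
      assume "S \<noteq> S'"
      then obtain t where "t \<in> S \<and> t \<notin> S' \<or> t \<in> S' \<and> t \<notin> S" by blast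
      then show False
      proof
        assume "t \<in> S \<and> t \<notin> S'"
        then show False using sep[OF K n f sig FDO, of S S' "fst t" "fst (snd t)" "snd (snd t)"] a by auto
      next
        assume "t \<in> S' \<and> t \<notin> S"
        then show False using sep[OF K n f sig FDO, of S' S "fst t" "fst (snd t)" "snd (snd t)"] a by auto
      qed
    qed
  qed
  have "card ?X = 2 ^ (P*K*K)" using card_Dom by (simp add: card_Pow)
  then obtain S where S: "S \<in> ?X" "P*K*K \<le> length (?g S)"
    using pigeon[OF inj _ ] card_Dom by auto
  moreover have "digraph n (Eg n K P S)" using digraph_Eg[OF K1 n] S by auto
  ultimately show ?thesis by blast
qed



lemma choose_h: "1 \<le> (m::nat) \<Longrightarrow> \<exists>h\<le>H. 2^h \<le> m \<and> (h = H \<or> m < 2^(h+1))"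
proof (induction H)
  case 0 then show ?case by auto
next
  case (Suc H)
  then obtain h where h: "h \<le> H" "2^h \<le> m" "h = H \<or> m < 2^(h+1)" by auto
  show ?case
  proof (cases "h = H \<and> 2^(H+1) \<le> m")
    case True then show ?thesis by (intro exI[of _ "Suc H"]) auto
  next
    case False then show ?thesis using h by (intro exI[of _ h]) auto
  qed
qed

theorem theorem4:
  shows "\<forall>C > 0. \<exists>c > (0::real). \<exists>N::nat. \<forall>(n::nat) (f::nat) (\<sigma>::real)
           (enc :: (nat \<times> nat) set \<Rightarrow> bool list) (Q :: bool list \<Rightarrow> (nat \<times> nat) set \<Rightarrow> ereal).
           n \<ge> N \<and> n \<ge> 1 \<and> f \<ge> 1 \<and> 2 powr (real f / 2) \<le> C * real n \<and> \<sigma> \<ge> 1 \<and>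
           is_FDO n f \<sigma> enc Q
           \<longrightarrow> (\<exists>E. digraph n E \<and> c * 2 powr (real f / 2) * real n \<le> real (length (enc E)))"
proof (intro allI impI)
  fix C :: real assume C: "C > 0"
  define c :: real where "c = 1 / (1024 * (C + 1))"
  have c0: "c > 0" unfolding c_def using C by simp
  have c16: "c \<le> 1/16" unfolding c_def using C by (simp add: field_simps)
  have cC: "c * C \<le> 1/1024" unfolding c_def using C by (simp add: field_simps)
  show "\<exists>c > (0::real). \<exists>N::nat. \<forall>(n::nat) (f::nat) (\<sigma>::real)
           (enc :: (nat \<times> nat) set \<Rightarrow> bool list) (Q :: bool list \<Rightarrow> (nat \<times> nat) set \<Rightarrow> ereal).
           n \<ge> N \<and> n \<ge> 1 \<and> f \<ge> 1 \<and> 2 powr (real f / 2) \<le> C * real n \<and> \<sigma> \<ge> 1 \<and>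
           is_FDO n f \<sigma> enc Q
           \<longrightarrow> (\<exists>E. digraph n E \<and> c * 2 powr (real f / 2) * real n \<le> real (length (enc E)))"
  proof (intro exI[of _ c] conjI c0 exI[of _ "17::nat"] allI impI, elim conjE)
    fix n f :: nat and \<sigma> :: real and enc :: "(nat \<times> nat) set \<Rightarrow> bool list"
      and Q :: "bool list \<Rightarrow> (nat \<times> nat) set \<Rightarrow> ereal"
    assume n17: "17 \<le> n" and "1 \<le> n" and f1: "1 \<le> f" and xC: "2 powr (real f / 2) \<le> C * real n"
      and sig: "1 \<le> \<sigma>" and FDO: "is_FDO n f \<sigma> enc Q"
    define H where "H = (f - 1) div 2"
    define m where "m = (n - 1) div 8"
    have m1: "1 \<le> m" unfolding m_def using n17 by simp
    obtain h where h: "h \<le> H" "2^h \<le> m" "h = H \<or> m < 2^(h+1)" using choose_h[OF m1] by blast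
    define K :: nat where "K = 2^h"
    define P where "P = (n - 1) div (4*K)"
    have K1: "1 \<le> K" unfolding K_def by simp
    have Km: "8*K \<le> n - 1" using h(2) unfolding K_def m_def by simp
    have dm: "n - 1 = P * (4*K) + (n-1) mod (4*K)" unfolding P_def by (metis div_mult_mod_eq)
    have md: "(n-1) mod (4*K) < 4*K" using K1 by simp
    have Pn: "P * (4*K) < n" using dm n17 by linarith
    have fh: "2*h + 1 \<le> f" using h(1) f1 unfolding H_def by simp
    obtain E where E: "digraph n E" "P * K * K \<le> length (enc E)"
      using core[OF K_def Pn fh sig FDO] by blast
    have x0: "0 \<le> 2 powr (real f / 2)" by simp
    have goal: "c * 2 powr (real f / 2) * real n \<le> real (P * K * K)"
    proof (cases "h = H")
      case True
      have "real f / 2 \<le> real (h + 1)" using True f1 unfolding H_def by simp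
      then have "2 powr (real f / 2) \<le> 2 powr real (h+1)" by (intro powr_mono) auto
      also have "\<dots> = 2 * real K" unfolding K_def by (subst powr_realpow) auto
      finally have xK: "2 powr (real f / 2) \<le> 2 * real K" .
      have e1: "P*(4*K) = 4*(K*P)" "8*K*P = 8*(K*P)" by simp_all
      have "n \<le> 8 * K * P" using dm md Km n17 unfolding e1 by linarith
      then have nP: "real n \<le> 8 * real K * real P" by (metis of_nat_le_iff of_nat_mult of_nat_numeral)
      have "c * 2 powr (real f / 2) * real n \<le> (1/16) * (2 * real K) * real n"
        using c16 xK c0 x0 by (intro mult_right_mono mult_mono) auto
      also have "\<dots> \<le> (1/16) * (2 * real K) * (8 * real K * real P)"
        using nP by (intro mult_left_mono) auto
      also have "\<dots> = real (P * K * K)" by simp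
      finally show ?thesis .
    next
      case False
      then have "m < 2^(h+1)" using h(3) by simp
      then have n16: "n \<le> 16 * K" unfolding m_def K_def by simp
      have "0 < P" unfolding P_def using Km K1 by (simp add: div_greater_zero_iff)
      then have P1: "1 \<le> P" by simp
      have rn: "real n \<le> 16 * real K" using n16 by (metis of_nat_le_iff of_nat_mult of_nat_numeral)
      have "c * 2 powr (real f / 2) * real n \<le> c * (C * real n) * real n"
        using xC c0 by (intro mult_right_mono mult_left_mono) auto
      also have "\<dots> = (c * C) * (real n * real n)" by (simp add: algebra_simps)
      also have "\<dots> \<le> (1/1024) * (real n * real n)" using cC by (intro mult_right_mono) auto
      also have "\<dots> \<le> (1/1024) * ((16 * real K) * (16 * real K))"
        using rn by (intro mult_left_mono mult_mono) auto
      also have "\<dots> = (1/4) * (real K * real K)" by simp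
      also have "\<dots> \<le> real P * (real K * real K)" using P1 by (intro mult_right_mono) auto
      also have "\<dots> = real (P * K * K)" by simp
      finally show ?thesis .
    qed
    show "\<exists>E. digraph n E \<and> c * 2 powr (real f / 2) * real n \<le> real (length (enc E))"
    proof (intro exI[of _ E] conjI)
      show "digraph n E" by (rule E(1))
      have "real (P * K * K) \<le> real (length (enc E))" using E(2) by (rule of_nat_mono)
      then show "c * 2 powr (real f / 2) * real n \<le> real (length (enc E))" using goal by linarith
    qed
  qed
qed

end
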